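(* Let $n\ge 1$, let $H$ and $L$ be Hermitian $n\times n$ matrices with $[H,L]=0$, and let $0<\eta\le 1$. Write $L=\sum_{k=1}^{K}\lambda_k P_k$ and $H=\sum_{j=1}^{D}\beta_j Q_j$, where $\lambda_k,\beta_j\in\mathbb{R}$, the $P_k$ are Hermitian orthogonal projections with $P_kP_l=\delta_{kl}P_l$, the $Q_j$ are Hermitian orthogonal projections with $Q_jQ_l=\delta_{jl}Q_l$, and $[P_k,Q_j]=0$ for all $k,j$. Let $\rho_0$ be an $n\times n$ density matrix. For $\theta\in\mathbb{R}^K$, $\gamma\in\mathbb{R}^D$ and $\alpha=(\alpha_{kj})_{1\le k\le j\le K}\in\mathbb{R}^{K(K+1)/2}$, set $\phi=(\theta,\gamma,\alpha)$, $L_\theta=\sum_{k=1}^K\theta_kP_k$, $H_\gamma=\sum_{j=1}^D\gamma_jQ_j$, $$\rho_\alpha=\rho_0+\sum_{1\le k\le j\le K}\big(P_k\rho_0P_j+(1-\delta_{kj})P_j\rho_0P_k\big)\big(e^{\alpha_{kj}}-1\big),$$ and $\tilde\rho_\phi=e^{\frac12L_\theta+\frac i2H_\gamma}\rho_\alpha e^{\frac12L_\theta-\frac i2H_\gamma}$. Define $F(\rho)=(1-\eta)L\rho L^\dagger-\frac12\big((\eta L+L^\dagger)L\rho+\rho L^\dagger(L+\eta L^\dagger)\big)$. Then, for every $\phi$, the matrices $i[H,\tilde\rho_\phi]$, $F(\tilde\rho_\phi)$ and $L\tilde\rho_\phi+\tilde\rho_\phi L$ belong to $\mathrm{span}\{\partial\tilde\rho_\phi/\partial\phi_1,\dots,\partial\tilde\rho_\phi/\partial\phi_N\}$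 (where $N=K+D+K(K+1)/2$ and $\phi_1,\dots,\phi_N$ are the coordinates $\theta_k,\gamma_j,\alpha_{kj}$), and more precisely $$i[H,\tilde\rho_\phi]=2\sum_{j=1}^D\beta_j\frac{\partial\tilde\rho_\phi}{\partial\gamma_j},\qquad L\tilde\rho_\phi+\tilde\rho_\phi L=2\sum_{k=1}^K\lambda_k\frac{\partial\tilde\rho_\phi}{\partial\theta_k},$$ $$F(\tilde\rho_\phi)=(1-\eta)\sum_{1\le k\le j\le K}\lambda_k\lambda_j\frac{\partial\tilde\rho_\phi}{\partial\alpha_{kj}}-(1+\eta)\sum_{k=1}^K\lambda_k^2\frac{\partial\tilde\rho_\phi}{\partial\theta_k}.$$
   Context: $[A,B]=AB-BA$, $A^\dagger$ is the conjugate transpose, $\delta_{kj}$ is the Kronecker delta. The sum over $(k,j)$ in the formula for $F$ ranges over the index set $1\le k\le j\le K$ on which the coordinates $\alpha_{kj}$ are defined. *)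

theory Defs
  imports "HOL-Analysis.Analysis"
begin

text \<open>Complex n x n matrices are represented as complex^'n^'n; the matrix
product is (**) (note: (*) on vec is componentwise, and is NOT used).\<close>

definition adj :: "complex^'n^'n \<Rightarrow> complex^'n^'n" where
  "adj A = (\<chi> i j. cnj (A $ j $ i))"

definition hermitian :: "complex^'n^'n \<Rightarrow> bool" where
  "hermitian A \<longleftrightarrow> adj A = A"

definition comm :: "complex^'n^'n \<Rightarrow> complex^'n^'n \<Rightarrow> complex^'n^'n" where
  "comm A B = A ** B - B ** A"

definition csmult :: "complex \<Rightarrow> complex^'n^'n \<Rightarrow> complex^'n^'n" where
  "csmult c A = (\<chi> i j. c * A $ i $ j)"

primrec mpow :: "complex^'n^'n \<Rightarrow> nat \<Rightarrow> complex^'n^'n" where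
  "mpow A 0 = mat 1"
| "mpow A (Suc m) = A ** mpow A m"

definition mexp :: "complex^'n^'n \<Rightarrow> complex^'n^'n" where
  "mexp A = (\<Sum>m. (1 / fact m) *\<^sub>R mpow A m)"

definition psd :: "complex^'n^'n \<Rightarrow> bool" where
  "psd A \<longleftrightarrow> (\<forall>v :: complex^'n. 0 \<le> Re (\<Sum>i\<in>UNIV. cnj (v $ i) * (A *v v) $ i))"

definition density_matrix :: "complex^'n^'n \<Rightarrow> bool" where
  "density_matrix A \<longleftrightarrow> hermitian A \<and> psd A \<and> trace A = 1"

definition orth_proj_family :: "nat \<Rightarrow> (nat \<Rightarrow> complex^'n^'n) \<Rightarrow> bool" where
  "orth_proj_family K P \<longleftrightarrow>
     (\<forall>k\<in>{1..K}. hermitian (P k)) \<and>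
     (\<forall>k\<in>{1..K}. \<forall>l\<in>{1..K}. P k ** P l = (if k = l then P l else 0))"

definition alpha_idx :: "nat \<Rightarrow> (nat \<times> nat) set" where
  "alpha_idx K = {(k, j). 1 \<le> k \<and> k \<le> j \<and> j \<le> K}"

definition rho_alpha :: "nat \<Rightarrow> (nat \<Rightarrow> complex^'n^'n) \<Rightarrow> complex^'n^'n
    \<Rightarrow> (nat \<Rightarrow> nat \<Rightarrow> real) \<Rightarrow> complex^'n^'n" where
  "rho_alpha K P \<rho>0 \<alpha> = \<rho>0 +
     (\<Sum>(k, j)\<in>alpha_idx K.
        (exp (\<alpha> k j) - 1) *\<^sub>R
          (P k ** \<rho>0 ** P j + (if k = j then 0 else 1) *\<^sub>R (P j ** \<rho>0 ** P k)))"

definition L_theta :: "nat \<Rightarrow> (nat \<Rightarrow> complex^'n^'n) \<Rightarrow> (nat \<Rightarrow> real) \<Rightarrow> complex^'n^'n" where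
  "L_theta K P \<theta> = (\<Sum>k=1..K. \<theta> k *\<^sub>R P k)"

definition H_gamma :: "nat \<Rightarrow> (nat \<Rightarrow> complex^'n^'n) \<Rightarrow> (nat \<Rightarrow> real) \<Rightarrow> complex^'n^'n" where
  "H_gamma D Q \<gamma> = (\<Sum>j=1..D. \<gamma> j *\<^sub>R Q j)"

definition rho_tilde :: "nat \<Rightarrow> nat \<Rightarrow> (nat \<Rightarrow> complex^'n^'n) \<Rightarrow> (nat \<Rightarrow> complex^'n^'n)
    \<Rightarrow> complex^'n^'n \<Rightarrow> (nat \<Rightarrow> real) \<Rightarrow> (nat \<Rightarrow> real) \<Rightarrow> (nat \<Rightarrow> nat \<Rightarrow> real)
    \<Rightarrow> complex^'n^'n" where
  "rho_tilde K D P Q \<rho>0 \<theta> \<gamma> \<alpha> =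
     mexp ((1/2) *\<^sub>R L_theta K P \<theta> + csmult (\<i>/2) (H_gamma D Q \<gamma>)) **
     rho_alpha K P \<rho>0 \<alpha> **
     mexp ((1/2) *\<^sub>R L_theta K P \<theta> - csmult (\<i>/2) (H_gamma D Q \<gamma>))"

definition Fmap :: "real \<Rightarrow> complex^'n^'n \<Rightarrow> complex^'n^'n \<Rightarrow> complex^'n^'n" where
  "Fmap \<eta> L \<rho> = (1 - \<eta>) *\<^sub>R (L ** \<rho> ** adj L)
     - (1/2) *\<^sub>R ((\<eta> *\<^sub>R L + adj L) ** L ** \<rho> + \<rho> ** adj L ** (L + \<eta> *\<^sub>R adj L))"

end

theory Submission
  imports Defs
begin


type_synonym 'n cmat = "complex^'n^'n"

lemma mm_add_r: "((A::('n::finite) cmat) + B) ** C = A ** C + B ** C"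
  by (simp add: matrix_matrix_mult_def vec_eq_iff sum.distrib distrib_right)
lemma mm_diff_r: "((A::('n::finite) cmat) - B) ** C = A ** C - B ** C"
  by (simp add: matrix_matrix_mult_def vec_eq_iff sum_subtractf left_diff_distrib)
lemma mm_diff_l: "(C::('n::finite) cmat) ** (A - B) = C ** A - C ** B"
  by (simp add: matrix_matrix_mult_def vec_eq_iff sum_subtractf right_diff_distrib)
lemma mm_sum_l: "(\<Sum>x\<in>S. (f x::('n::finite) cmat)) ** (B::'n cmat) = (\<Sum>x\<in>S. f x ** B)"
  by (induction S rule: infinite_finite_induct) (auto simp: mm_add_r)
lemma mm_sum_r: "(B::('n::finite) cmat) ** (\<Sum>x\<in>S. f x) = (\<Sum>x\<in>S. B ** f x)"
  by (induction S rule: infinite_finite_induct) (auto simp: matrix_add_ldistrib)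

lemma cs_add: "csmult (a + b) (A::('n::finite) cmat) = csmult a A + csmult b A"
  by (simp add: csmult_def vec_eq_iff distrib_right)
lemma cs_diff: "csmult (a - b) (A::('n::finite) cmat) = csmult a A - csmult b A"
  by (simp add: csmult_def vec_eq_iff left_diff_distrib)
lemma cs_add_r: "csmult a ((A::('n::finite) cmat) + B) = csmult a A + csmult a B"
  by (simp add: csmult_def vec_eq_iff distrib_left)
lemma cs_diff_r: "csmult a ((A::('n::finite) cmat) - B) = csmult a A - csmult a B"
  by (simp add: csmult_def vec_eq_iff right_diff_distrib)
lemma cs_mult: "csmult a (csmult b (A::('n::finite) cmat)) = csmult (a * b) A"
  by (simp add: csmult_def vec_eq_iff)
lemma cs_one[simp]: "csmult 1 (A::('n::finite) cmat) = A"
  by (simp add: csmult_def vec_eq_iff)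
lemma cs_zero[simp]: "csmult 0 (A::('n::finite) cmat) = 0"
  by (simp add: csmult_def vec_eq_iff)
lemma cs_zero_r[simp]: "csmult a (0::('n::finite) cmat) = 0"
  by (simp add: csmult_def vec_eq_iff)
lemma scaleR_cs: "r *\<^sub>R (A::('n::finite) cmat) = csmult (of_real r) A"
  by (simp add: csmult_def vec_eq_iff) (simp add: scaleR_conv_of_real)
lemma cs_sum: "csmult (\<Sum>x\<in>S. f x) (A::('n::finite) cmat) = (\<Sum>x\<in>S. csmult (f x) A)"
  by (induction S rule: infinite_finite_induct) (auto simp: cs_add)
lemma cs_sum_r: "csmult a (\<Sum>x\<in>S. f x) = (\<Sum>x\<in>S. csmult a (f x :: ('n::finite) cmat))"
  by (induction S rule: infinite_finite_induct) (auto simp: cs_add_r)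
lemma mm_cs_l: "csmult a (A::('n::finite) cmat) ** B = csmult a (A ** B)"
  by (simp add: csmult_def matrix_matrix_mult_def vec_eq_iff sum_distrib_left mult.assoc)
lemma mm_cs_r: "(A::('n::finite) cmat) ** csmult a B = csmult a (A ** B)"
  by (simp add: csmult_def matrix_matrix_mult_def vec_eq_iff sum_distrib_left mult_ac)

lemma linear_cs: "linear (\<lambda>z. csmult z (A::('n::finite) cmat))"
proof -
  have e: "r *\<^sub>R (b::complex) = of_real r * b" for r b by (simp add: scaleR_conv_of_real)
  show ?thesis by (rule linearI) (simp_all add: cs_add scaleR_cs cs_mult e)
qed
lemma bl_cs: "bounded_linear (\<lambda>z. csmult z (A::('n::finite) cmat))"
  using linear_cs linear_conv_bounded_linear by blast

lemma mexp_orth: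
  fixes R :: "'i \<Rightarrow> ('n::finite) cmat"
  assumes fin: "finite I"
    and orth: "\<And>i j. i \<in> I \<Longrightarrow> j \<in> I \<Longrightarrow> R i ** R j = (if i = j then R i else 0)"
    and tot: "(\<Sum>i\<in>I. R i) = mat 1"
  shows "mexp (\<Sum>i\<in>I. csmult (c i) (R i)) = (\<Sum>i\<in>I. csmult (exp (c i)) (R i))"
proof -
  let ?X = "\<Sum>i\<in>I. csmult (c i) (R i)"
  have pw: "mpow ?X m = (\<Sum>i\<in>I. csmult (c i ^ m) (R i))" for m
  proof (induction m)
    case 0 then show ?case using tot by simp
  next
    case (Suc m)
    have "mpow ?X (Suc m) = (\<Sum>i\<in>I. \<Sum>j\<in>I. csmult (c i ^ m * c j) (R j ** R i))"
      by (simp add: Suc mm_sum_l mm_sum_r mm_cs_l mm_cs_r cs_mult cs_sum_r)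
    also have "\<dots> = (\<Sum>i\<in>I. \<Sum>j\<in>I. if j = i then csmult (c i ^ Suc m) (R i) else 0)"
      by (intro sum.cong refl) (auto simp: orth mult.commute)
    also have "\<dots> = (\<Sum>i\<in>I. csmult (c i ^ Suc m) (R i))"
      using fin by (simp add: sum.delta')
    finally show ?case .
  qed
  have t: "(\<lambda>m. (1 / fact m) *\<^sub>R mpow ?X m) = (\<lambda>m. \<Sum>i\<in>I. csmult (c i ^ m /\<^sub>R fact m) (R i))"
    by (auto simp: pw scaleR_cs cs_sum_r cs_mult scaleR_conv_of_real divide_inverse mult.commute)
  have "(\<lambda>m. \<Sum>i\<in>I. csmult (c i ^ m /\<^sub>R fact m) (R i)) sums (\<Sum>i\<in>I. csmult (exp (c i)) (R i))"
    by (intro sums_sum bounded_linear.sums[OF bl_cs] exp_converges)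
  then show ?thesis unfolding mexp_def t by (rule sums_unique[symmetric])
qed




definition ext :: "nat \<Rightarrow> (nat \<Rightarrow> ('n::finite) cmat) \<Rightarrow> nat \<Rightarrow> 'n cmat" where
  "ext K P k = (if k = 0 then mat 1 - (\<Sum>l=1..K. P l) else P k)"

lemma ext_orth:
  assumes "orth_proj_family K (P :: nat \<Rightarrow> ('n::finite) cmat)"
  shows "\<And>k l. k \<in> {0..K} \<Longrightarrow> l \<in> {0..K} \<Longrightarrow> ext K P k ** ext K P l = (if k = l then ext K P k else 0)"
    and "(\<Sum>k=0..K. ext K P k) = mat 1"
proof -
  have o: "\<And>k l. k \<in> {1..K} \<Longrightarrow> l \<in> {1..K} \<Longrightarrow> P k ** P l = (if k = l then P l else 0)"
    using assms unfolding orth_proj_family_def by blast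
  define S where "S = (\<Sum>l=1..K. P l)"
  have PS: "P k ** S = P k" if "k \<in> {1..K}" for k
  proof -
    have "P k ** S = (\<Sum>l=1..K. if k = l then P l else 0)"
      unfolding S_def mm_sum_r by (intro sum.cong refl) (use o that in auto)
    also have "\<dots> = P k" using that by (simp add: sum.delta)
    finally show ?thesis .
  qed
  have SP: "S ** P k = P k" if "k \<in> {1..K}" for k
  proof -
    have "S ** P k = (\<Sum>l=1..K. if l = k then P k else 0)"
      unfolding S_def mm_sum_l by (intro sum.cong refl) (use o that in auto)
    also have "\<dots> = P k" using that by (simp add: sum.delta')
    finally show ?thesis .
  qed
  have SS: "S ** S = S"
  proof -
    have "S ** S = (\<Sum>l=1..K. P l) ** S" by (simp add: S_def)
    also have "\<dots> = (\<Sum>l=1..K. P l ** S)" by (rule mm_sum_l)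
    also have "\<dots> = (\<Sum>l=1..K. P l)" by (rule sum.cong) (auto simp: PS)
    finally show ?thesis by (simp add: S_def)
  qed
  show "ext K P k ** ext K P l = (if k = l then ext K P k else 0)" if "k \<in> {0..K}" "l \<in> {0..K}" for k l
  proof -
    have e0: "ext K P 0 = mat 1 - S" by (simp add: ext_def S_def)
    have ek: "k \<noteq> 0 \<Longrightarrow> ext K P k = P k" for k by (simp add: ext_def)
    show ?thesis
      using that by (cases "k = 0"; cases "l = 0") (auto simp: e0 ek mm_diff_l mm_diff_r SS PS SP o)
  qed
  have "(\<Sum>k=0..K. ext K P k) = ext K P 0 + (\<Sum>k=1..K. ext K P k)"
    by (simp add: sum.atLeast_Suc_atMost)
  also have "(\<Sum>k=1..K. ext K P k) = S" unfolding S_def by (intro sum.cong refl) (auto simp: ext_def)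
  finally show "(\<Sum>k=0..K. ext K P k) = mat 1" by (simp add: ext_def S_def)
qed

lemma ext_comm:
  assumes "\<And>j. j \<in> {1..D} \<Longrightarrow> A ** Q j = Q j ** (A :: ('n::finite) cmat)"
    and "j \<in> {0..D}"
  shows "A ** ext D Q j = ext D Q j ** A"
  using assms by (auto simp: ext_def mm_diff_l mm_diff_r mm_sum_l mm_sum_r intro!: sum.cong)




context
  fixes A B :: "nat \<Rightarrow> ('n::finite) cmat" and K D :: nat
  assumes oA: "\<And>k l. k \<in> {0..K} \<Longrightarrow> l \<in> {0..K} \<Longrightarrow> A k ** A l = (if k = l then A k else 0)"
    and sA: "(\<Sum>k=0..K. A k) = mat 1"
    and oB: "\<And>k l. k \<in> {0..D} \<Longrightarrow> l \<in> {0..D} \<Longrightarrow> B k ** B l = (if k = l then B k else 0)"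
    and sB: "(\<Sum>k=0..D. B k) = mat 1"
    and cAB: "\<And>k j. k \<in> {0..K} \<Longrightarrow> j \<in> {0..D} \<Longrightarrow> A k ** B j = B j ** A k"
begin

lemma comb_orth:
  assumes "p \<in> {0..K} \<times> {0..D}" "q \<in> {0..K} \<times> {0..D}"
  shows "(A (fst p) ** B (snd p)) ** (A (fst q) ** B (snd q)) =
     (if p = q then A (fst p) ** B (snd p) else 0)"
proof -
  have "(A (fst p) ** B (snd p)) ** (A (fst q) ** B (snd q)) =
        (A (fst p) ** A (fst q)) ** (B (snd p) ** B (snd q))"
  proof -
    have c: "B (snd p) ** A (fst q) = A (fst q) ** B (snd p)"
      using assms by (simp add: cAB mem_Times_iff)
    have "(A (fst p) ** B (snd p)) ** (A (fst q) ** B (snd q)) =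
          A (fst p) ** ((B (snd p) ** A (fst q)) ** B (snd q))"
      by (simp add: matrix_mul_assoc)
    also have "\<dots> = (A (fst p) ** A (fst q)) ** (B (snd p) ** B (snd q))"
      by (simp add: c matrix_mul_assoc)
    finally show ?thesis .
  qed
  then show ?thesis using assms by (auto simp: oA oB mem_Times_iff prod_eq_iff)
qed

lemma comb_sum: "(\<Sum>p\<in>{0..K} \<times> {0..D}. A (fst p) ** B (snd p)) = mat 1"
proof -
  have "(\<Sum>p\<in>{0..K} \<times> {0..D}. A (fst p) ** B (snd p)) = (\<Sum>k=0..K. \<Sum>j=0..D. A k ** B j)"
    by (simp add: sum.cartesian_product split_def)
  also have "\<dots> = (\<Sum>k=0..K. A k) ** (\<Sum>j=0..D. B j)"
    by (simp add: mm_sum_l mm_sum_r, rule sum.swap)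
  finally show ?thesis by (simp add: sA sB)
qed

lemma comb_A_l:
  assumes "k \<in> {0..K}" "p \<in> {0..K} \<times> {0..D}"
  shows "A k ** (A (fst p) ** B (snd p)) = (if fst p = k then A (fst p) ** B (snd p) else 0)"
  using assms by (auto simp: matrix_mul_assoc oA mem_Times_iff)

lemma comb_A_r:
  assumes "k \<in> {0..K}" "p \<in> {0..K} \<times> {0..D}"
  shows "(A (fst p) ** B (snd p)) ** A k = (if fst p = k then A (fst p) ** B (snd p) else 0)"
proof -
  have "(A (fst p) ** B (snd p)) ** A k = (A (fst p) ** A k) ** B (snd p)"
  proof -
    have c: "B (snd p) ** A k = A k ** B (snd p)"
      using assms by (simp add: cAB mem_Times_iff)
    show ?thesis by (simp add: matrix_mul_assoc[symmetric] c)
  qed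
  then show ?thesis using assms by (auto simp: oA mem_Times_iff)
qed

lemma comb_B_r:
  assumes "j \<in> {0..D}" "p \<in> {0..K} \<times> {0..D}"
  shows "(A (fst p) ** B (snd p)) ** B j = (if snd p = j then A (fst p) ** B (snd p) else 0)"
  using assms by (auto simp: matrix_mul_assoc[symmetric] oB mem_Times_iff)

lemma comb_B_l:
  assumes "j \<in> {0..D}" "p \<in> {0..K} \<times> {0..D}"
  shows "B j ** (A (fst p) ** B (snd p)) = (if snd p = j then A (fst p) ** B (snd p) else 0)"
proof -
  have "B j ** (A (fst p) ** B (snd p)) = A (fst p) ** (B j ** B (snd p))"
  proof -
    have c: "B j ** A (fst p) = A (fst p) ** B j"
      using assms by (simp add: cAB mem_Times_iff)
    show ?thesis by (simp add: matrix_mul_assoc c)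
  qed
  then show ?thesis using assms by (auto simp: oB mem_Times_iff)
qed

lemma comb_decomp:
  assumes "\<And>p. p \<in> {0..K} \<times> {0..D} \<Longrightarrow> X ** (A (fst p) ** B (snd p)) = csmult (x p) (A (fst p) ** B (snd p))"
  shows "X = (\<Sum>p\<in>{0..K} \<times> {0..D}. csmult (x p) (A (fst p) ** B (snd p)))"
proof -
  have "X = X ** mat 1" by simp
  also have "\<dots> = (\<Sum>p\<in>{0..K} \<times> {0..D}. X ** (A (fst p) ** B (snd p)))"
    by (simp add: comb_sum[symmetric] mm_sum_r)
  also have "\<dots> = (\<Sum>p\<in>{0..K} \<times> {0..D}. csmult (x p) (A (fst p) ** B (snd p)))"
    by (rule sum.cong) (auto simp: assms)
  finally show ?thesis .
qed

lemma combA_lin_l: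
  assumes "p \<in> {0..K} \<times> {0..D}"
  shows "(\<Sum>k=1..K. f k *\<^sub>R A k) ** (A (fst p) ** B (snd p)) =
    csmult (of_real (if fst p \<in> {1..K} then f (fst p) else 0)) (A (fst p) ** B (snd p))"
proof -
  have "(\<Sum>k=1..K. f k *\<^sub>R A k) ** (A (fst p) ** B (snd p)) =
     (\<Sum>k=1..K. if fst p = k then csmult (of_real (f k)) (A (fst p) ** B (snd p)) else 0)"
    unfolding mm_sum_l by (intro sum.cong refl) (use assms in \<open>auto simp: scaleR_cs mm_cs_l comb_A_l\<close>)
  then show ?thesis by (simp add: sum.delta')
qed

lemma combA_lin_r:
  assumes "p \<in> {0..K} \<times> {0..D}"
  shows "(A (fst p) ** B (snd p)) ** (\<Sum>k=1..K. f k *\<^sub>R A k) =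
    csmult (of_real (if fst p \<in> {1..K} then f (fst p) else 0)) (A (fst p) ** B (snd p))"
proof -
  have "(A (fst p) ** B (snd p)) ** (\<Sum>k=1..K. f k *\<^sub>R A k) =
     (\<Sum>k=1..K. if fst p = k then csmult (of_real (f k)) (A (fst p) ** B (snd p)) else 0)"
    unfolding mm_sum_r by (intro sum.cong refl) (use assms in \<open>auto simp: scaleR_cs mm_cs_r comb_A_r\<close>)
  then show ?thesis by (simp add: sum.delta')
qed

lemma combB_lin_l:
  assumes "p \<in> {0..K} \<times> {0..D}"
  shows "(\<Sum>j=1..D. f j *\<^sub>R B j) ** (A (fst p) ** B (snd p)) =
    csmult (of_real (if snd p \<in> {1..D} then f (snd p) else 0)) (A (fst p) ** B (snd p))"
proof -
  have "(\<Sum>j=1..D. f j *\<^sub>R B j) ** (A (fst p) ** B (snd p)) =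
     (\<Sum>j=1..D. if snd p = j then csmult (of_real (f j)) (A (fst p) ** B (snd p)) else 0)"
    unfolding mm_sum_l by (intro sum.cong refl) (use assms in \<open>auto simp: scaleR_cs mm_cs_l comb_B_l\<close>)
  then show ?thesis by (simp add: sum.delta')
qed

lemma combB_lin_r:
  assumes "p \<in> {0..K} \<times> {0..D}"
  shows "(A (fst p) ** B (snd p)) ** (\<Sum>j=1..D. f j *\<^sub>R B j) =
    csmult (of_real (if snd p \<in> {1..D} then f (snd p) else 0)) (A (fst p) ** B (snd p))"
proof -
  have "(A (fst p) ** B (snd p)) ** (\<Sum>j=1..D. f j *\<^sub>R B j) =
     (\<Sum>j=1..D. if snd p = j then csmult (of_real (f j)) (A (fst p) ** B (snd p)) else 0)"
    unfolding mm_sum_r by (intro sum.cong refl) (use assms in \<open>auto simp: scaleR_cs mm_cs_r comb_B_r\<close>)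
  then show ?thesis by (simp add: sum.delta')
qed

end




definition msum :: "'i set \<Rightarrow> ('i \<Rightarrow> 'i \<Rightarrow> ('n::finite) cmat) \<Rightarrow> ('i \<Rightarrow> 'i \<Rightarrow> complex) \<Rightarrow> 'n cmat" where
  "msum I M s = (\<Sum>p\<in>I. \<Sum>q\<in>I. csmult (s p q) (M p q))"

lemma msum_cong: "(\<And>p q. p \<in> I \<Longrightarrow> q \<in> I \<Longrightarrow> s p q = t p q) \<Longrightarrow> msum I M s = msum I M t"
  unfolding msum_def by (intro sum.cong refl) auto

lemma msum_add: "msum I M s + msum I M t = msum I M (\<lambda>p q. s p q + t p q)"
  unfolding msum_def by (simp add: sum.distrib[symmetric] cs_add)

lemma msum_diff: "msum I M s - msum I M t = msum I M (\<lambda>p q. s p q - t p q)"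
  unfolding msum_def by (simp add: sum_subtractf[symmetric] cs_diff)

lemma msum_scaleR: "r *\<^sub>R msum I M s = msum I M (\<lambda>p q. of_real r * s p q)"
  unfolding msum_def by (simp add: scaleR_cs cs_sum_r cs_mult)

lemma msum_cs: "csmult c (msum I M s) = msum I M (\<lambda>p q. c * s p q)"
  unfolding msum_def by (simp add: cs_sum_r cs_mult)

lemma msum_sum: "(\<Sum>x\<in>S. msum I M (s x)) = msum I M (\<lambda>p q. \<Sum>x\<in>S. s x p q)"
  unfolding msum_def by (simp add: cs_sum sum.swap[of _ S])

lemma msum_mult_l:
  assumes "\<And>p q. p \<in> I \<Longrightarrow> q \<in> I \<Longrightarrow> X ** M p q = csmult (x p q) (M p q)"
  shows "X ** msum I M s = msum I M (\<lambda>p q. x p q * s p q)"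
  unfolding msum_def mm_sum_r mm_cs_r
  by (intro sum.cong refl) (simp add: assms cs_mult mult.commute)

lemma msum_mult_r:
  assumes "\<And>p q. p \<in> I \<Longrightarrow> q \<in> I \<Longrightarrow> M p q ** X = csmult (x p q) (M p q)"
  shows "msum I M s ** X = msum I M (\<lambda>p q. x p q * s p q)"
  unfolding msum_def mm_sum_l mm_cs_l
  by (intro sum.cong refl) (simp add: assms cs_mult mult.commute)

lemma deriv_exp_affine:
  fixes a b :: complex
  shows "((\<lambda>t::real. exp (a + of_real t * b)) has_vector_derivative (b * exp (a + of_real t0 * b))) (at t0)"
proof -
  have "((\<lambda>z. exp (a + z * b)) has_field_derivative (b * exp (a + of_real t0 * b))) (at (of_real t0))"
    by (auto intro!: derivative_eq_intros)
  from has_vector_derivative_real_field[OF this] show ?thesis .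
qed

lemma msum_deriv:
  assumes fin: "finite I"
    and Z: "\<And>t p q. Z t p q = a p q + of_real t * b p q"
  shows "((\<lambda>t. msum I M (\<lambda>p q. exp (Z t p q))) has_vector_derivative
           msum I M (\<lambda>p q. b p q * exp (Z tt p q))) (at tt)"
  unfolding msum_def Z
  by (intro has_vector_derivative_sum bounded_linear.has_vector_derivative[OF bl_cs] deriv_exp_affine)

lemma sum_pair_delta:
  assumes "finite S"
  shows "(\<Sum>(k, j)\<in>S. if k = a \<and> j = b then f k j else 0) = (if (a, b) \<in> S then f a b else (0::'a::comm_monoid_add))"
proof -
  have "(\<Sum>(k, j)\<in>S. if k = a \<and> j = b then f k j else 0) = (\<Sum>x\<in>S. if x = (a, b) then f a b else 0)"
    by (intro sum.cong refl) (auto split: prod.splits)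
  also have "\<dots> = (if (a, b) \<in> S then f a b else 0)" using assms by (simp add: sum.delta')
  finally show ?thesis .
qed

lemma finite_alpha_idx: "finite (alpha_idx K)"
proof -
  have "alpha_idx K \<subseteq> {1..K} \<times> {1..K}" by (auto simp: alpha_idx_def)
  then show ?thesis by (rule finite_subset) auto
qed

lemma pt1: "(exp (x::real) - 1) *
      ((if a = k \<and> b = j then 1 else 0) + (if k = j then 0 else 1) * (if a = j \<and> b = (k::nat) then 1 else 0))
   = (if k = a \<and> j = b then exp x - 1 else 0)
     + (if k = b \<and> j = a then (if k = j then 0 else 1) * (exp x - 1) else 0)"
  by (cases "a = k"; cases "b = j"; cases "k = j"; simp)
lemma pt2: "(f::'a::comm_ring_1) * (if c1 \<and> c2 \<and> m = k \<and> n = j then 1 else 0)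
   = (if k = m \<and> j = n then (if c1 \<and> c2 then f else 0) else 0)"
  by (cases c1; cases c2; cases "m = k"; cases "n = j"; simp)
lemma pt3: "a \<le> K \<Longrightarrow> b \<le> (K::nat) \<Longrightarrow> a \<in> {1..K} \<and> b \<in> {1..K} \<Longrightarrow>
   (if (a, b) \<in> alpha_idx K then exp (\<alpha> a b) - 1 else 0)
     + (if (b, a) \<in> alpha_idx K then (if b = a then 0 else 1) * (exp (\<alpha> b a) - 1) else 0) 
   = exp (\<alpha> (min a b) (max a b)) - (1::real)"
  by (cases "a \<le> b"; cases "a = b") (simp_all add: alpha_idx_def min_def max_def)

lemma alpha_coef:
  assumes "a \<le> K" "b \<le> K"
  shows "(\<Sum>(k, j)\<in>alpha_idx K. (exp (\<alpha> k j) - 1) *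
      ((if a = k \<and> b = j then 1 else 0) + (if k = j then 0 else 1) * (if a = j \<and> b = k then 1 else 0)))
    = (if a \<in> {1..K} \<and> b \<in> {1..K} then exp (\<alpha> (min a b) (max a b)) - 1 else (0::real))"
proof -
  have "(\<Sum>(k, j)\<in>alpha_idx K. (exp (\<alpha> k j) - 1) *
      ((if a = k \<and> b = j then 1 else 0) + (if k = j then 0 else 1) * (if a = j \<and> b = k then 1 else 0)))
   = (\<Sum>(k, j)\<in>alpha_idx K. (if k = a \<and> j = b then exp (\<alpha> k j) - 1 else 0)
     + (if k = b \<and> j = a then (if k = j then 0 else 1) * (exp (\<alpha> k j) - 1) else 0))"
    by (simp only: pt1)
  also have "\<dots> = (\<Sum>(k, j)\<in>alpha_idx K. if k = a \<and> j = b then exp (\<alpha> k j) - 1 else 0)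
     + (\<Sum>(k, j)\<in>alpha_idx K. if k = b \<and> j = a then (if k = j then 0 else 1) * (exp (\<alpha> k j) - 1) else 0)"
    by (simp only: split_def sum.distrib)
  also have "\<dots> = (if (a, b) \<in> alpha_idx K then exp (\<alpha> a b) - 1 else 0)
     + (if (b, a) \<in> alpha_idx K then (if b = a then 0 else 1) * (exp (\<alpha> b a) - 1) else 0)"
    by (simp only: sum_pair_delta[OF finite_alpha_idx])
  also have "\<dots> = (if a \<in> {1..K} \<and> b \<in> {1..K} then exp (\<alpha> (min a b) (max a b)) - 1 else 0)"
  proof (cases "a \<in> {1..K} \<and> b \<in> {1..K}")
    case True
    then show ?thesis using assms pt3 by presburger
  next
    case False
    then show ?thesis by (auto simp: alpha_idx_def)
  qed
  finally show ?thesis .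
qed

lemma lamlam_coef:
  assumes "a \<le> K" "b \<le> K"
  shows "(\<Sum>(k, j)\<in>alpha_idx K. f k j *
      (if a \<in> {1..K} \<and> b \<in> {1..K} \<and> min a b = k \<and> max a b = j then 1 else 0))
    = (if a \<in> {1..K} \<and> b \<in> {1..K} then f (min a b) (max a b) else (0::'a::comm_ring_1))"
proof -
  have "(\<Sum>(k, j)\<in>alpha_idx K. f k j *
      (if a \<in> {1..K} \<and> b \<in> {1..K} \<and> min a b = k \<and> max a b = j then 1 else 0))
    = (\<Sum>(k, j)\<in>alpha_idx K. if k = min a b \<and> j = max a b then (if a \<in> {1..K} \<and> b \<in> {1..K} then f k j else 0) else 0)"
    by (simp only: pt2)
  also have "\<dots> = (if (min a b, max a b) \<in> alpha_idx K then (if a \<in> {1..K} \<and> b \<in> {1..K} then f (min a b) (max a b) else 0) else 0)"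
    by (simp only: sum_pair_delta[OF finite_alpha_idx])
  also have "\<dots> = (if a \<in> {1..K} \<and> b \<in> {1..K} then f (min a b) (max a b) else 0)"
  proof (cases "a \<in> {1..K} \<and> b \<in> {1..K}")
    case True
    then have "(min a b, max a b) \<in> alpha_idx K" by (auto simp: alpha_idx_def min_def max_def)
    then show ?thesis by simp
  next
    case False
    then show ?thesis by (simp only: if_False if_cancel)
  qed
  finally show ?thesis .
qed

lemma sum_delta2:
  assumes "finite S"
  shows "(\<Sum>j\<in>S. f j * (((if a = j then c else 0) + (if b = j then d else 0)) * x)) =
    ((if a \<in> S then f a * c else 0) + (if b \<in> S then f b * d else (0::'a::comm_ring_1))) * x"
proof -
  have "(\<Sum>j\<in>S. f j * (((if a = j then c else 0) + (if b = j then d else 0)) * x)) =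
      (\<Sum>j\<in>S. (if a = j then f j * c * x else 0) + (if b = j then f j * d * x else 0))"
    by (intro sum.cong refl) (simp add: algebra_simps)
  also have "\<dots> = (if a \<in> S then f a * c * x else 0) + (if b \<in> S then f b * d * x else 0)"
    using assms by (simp add: sum.distrib)
  finally show ?thesis by (simp add: algebra_simps)
qed



lemma lin3:
  fixes Rp Rq X Y :: "('n::finite) cmat"
  shows "Rp ** (s *\<^sub>R (X + c *\<^sub>R Y)) ** Rq = s *\<^sub>R (Rp ** X ** Rq + c *\<^sub>R (Rp ** Y ** Rq))"
  by (simp add: scaleR_cs mm_cs_l mm_cs_r matrix_add_ldistrib mm_add_r cs_add_r)

lemma ifM: "(if P then (A::('n::finite) cmat) else 0) = csmult (of_real (if P then 1 else 0)) A"
  by simp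

theorem lemma1:
  fixes H L \<rho>0 :: "complex^'n^'n"
    and \<eta> :: real and K D :: nat
    and lam \<beta> :: "nat \<Rightarrow> real"
    and P Q :: "nat \<Rightarrow> complex^'n^'n"
    and \<theta> \<gamma> :: "nat \<Rightarrow> real" and \<alpha> :: "nat \<Rightarrow> nat \<Rightarrow> real"
  assumes herm_H: "hermitian H" and herm_L: "hermitian L"
    and comm_HL: "comm H L = 0"
    and eta: "0 < \<eta>" "\<eta> \<le> 1"
    and L_dec: "L = (\<Sum>k=1..K. lam k *\<^sub>R P k)"
    and H_dec: "H = (\<Sum>j=1..D. \<beta> j *\<^sub>R Q j)"
    and P_proj: "orth_proj_family K P"
    and Q_proj: "orth_proj_family D Q"
    and PQ_comm: "\<forall>k\<in>{1..K}. \<forall>j\<in>{1..D}. comm (P k) (Q j) = 0"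
    and rho0: "density_matrix \<rho>0"
  shows "\<exists>(D\<theta> :: nat \<Rightarrow> complex^'n^'n) (D\<gamma> :: nat \<Rightarrow> complex^'n^'n)
            (D\<alpha> :: nat \<Rightarrow> nat \<Rightarrow> complex^'n^'n).
    (\<forall>k\<in>{1..K}. ((\<lambda>t. rho_tilde K D P Q \<rho>0 (\<theta>(k := t)) \<gamma> \<alpha>)
        has_vector_derivative D\<theta> k) (at (\<theta> k))) \<and>
    (\<forall>j\<in>{1..D}. ((\<lambda>t. rho_tilde K D P Q \<rho>0 \<theta> (\<gamma>(j := t)) \<alpha>)
        has_vector_derivative D\<gamma> j) (at (\<gamma> j))) \<and>
    (\<forall>(k, j)\<in>alpha_idx K. ((\<lambda>t. rho_tilde K D P Q \<rho>0 \<theta> \<gamma> (\<alpha>(k := (\<alpha> k)(j := t))))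
        has_vector_derivative D\<alpha> k j) (at (\<alpha> k j))) \<and>
    (let \<rho> = rho_tilde K D P Q \<rho>0 \<theta> \<gamma> \<alpha>;
         S = span (D\<theta> ` {1..K} \<union> D\<gamma> ` {1..D} \<union> (\<lambda>(k, j). D\<alpha> k j) ` alpha_idx K)
     in csmult \<i> (comm H \<rho>) \<in> S \<and> Fmap \<eta> L \<rho> \<in> S \<and> L ** \<rho> + \<rho> ** L \<in> S \<and>
        csmult \<i> (comm H \<rho>) = 2 *\<^sub>R (\<Sum>j=1..D. \<beta> j *\<^sub>R D\<gamma> j) \<and>
        L ** \<rho> + \<rho> ** L = 2 *\<^sub>R (\<Sum>k=1..K. lam k *\<^sub>R D\<theta> k) \<and>
        Fmap \<eta> L \<rho> = (1 - \<eta>) *\<^sub>R (\<Sum>(k, j)\<in>alpha_idx K. (lam k * lam j) *\<^sub>R D\<alpha> k j)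
                       - (1 + \<eta>) *\<^sub>R (\<Sum>k=1..K. (lam k)\<^sup>2 *\<^sub>R D\<theta> k))"
proof -
  define A where "A = ext K P"
  define B where "B = ext D Q"
  define I where "I = {0..K} \<times> {0..D}"
  define R where "R p = A (fst p) ** B (snd p)" for p :: "nat \<times> nat"
  define M where "M p q = R p ** \<rho>0 ** R q" for p q
  have finI: "finite I" by (simp add: I_def)
  have oA: "\<And>k l. k \<in> {0..K} \<Longrightarrow> l \<in> {0..K} \<Longrightarrow> A k ** A l = (if k = l then A k else 0)"
    unfolding A_def by (rule ext_orth(1)[OF P_proj])
  have sA: "(\<Sum>k=0..K. A k) = mat 1" unfolding A_def by (rule ext_orth(2)[OF P_proj])
  have oB: "\<And>k l. k \<in> {0..D} \<Longrightarrow> l \<in> {0..D} \<Longrightarrow> B k ** B l = (if k = l then B k else 0)"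
    unfolding B_def by (rule ext_orth(1)[OF Q_proj])
  have sB: "(\<Sum>k=0..D. B k) = mat 1" unfolding B_def by (rule ext_orth(2)[OF Q_proj])
  have PQc: "P k ** Q j = Q j ** P k" if "k \<in> {1..K}" "j \<in> {1..D}" for k j
    using PQ_comm that by (auto simp: comm_def)
  have cAQ: "Q j ** A k = A k ** Q j" if "k \<in> {0..K}" "j \<in> {1..D}" for k j
    unfolding A_def by (rule ext_comm) (use PQc that in auto)
  have cAB: "A k ** B j = B j ** A k" if "k \<in> {0..K}" "j \<in> {0..D}" for k j
    unfolding B_def by (rule ext_comm) (use cAQ that in auto)
  note cm = comb_orth[OF oA sA oB sB cAB] comb_sum[OF oA sA oB sB cAB]
    comb_decomp[OF oA sA oB sB cAB]
    combA_lin_l[OF oA sA oB sB cAB] combA_lin_r[OF oA sA oB sB cAB]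
    combB_lin_l[OF oA sA oB sB cAB] combB_lin_r[OF oA sA oB sB cAB]
    comb_A_l[OF oA sA oB sB cAB] comb_A_r[OF oA sA oB sB cAB]
  have orthR: "R p ** R q = (if p = q then R p else 0)" if "p \<in> I" "q \<in> I" for p q
    using cm(1) that unfolding R_def I_def by blast
  have sumR: "(\<Sum>p\<in>I. R p) = mat 1" using cm(2) unfolding R_def I_def .
  have PA: "P k = A k" if "k \<in> {1..K}" for k using that by (simp add: A_def ext_def)
  have QB: "Q j = B j" if "j \<in> {1..D}" for j using that by (simp add: B_def ext_def)
  have linA: "(\<Sum>k=1..K. f k *\<^sub>R P k) = (\<Sum>k=1..K. f k *\<^sub>R A k)" for f
    by (intro sum.cong refl) (simp add: PA)
  have linB: "(\<Sum>j=1..D. f j *\<^sub>R Q j) = (\<Sum>j=1..D. f j *\<^sub>R B j)" for f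
    by (intro sum.cong refl) (simp add: QB)
  have linA_l: "(\<Sum>k=1..K. f k *\<^sub>R P k) ** R p = csmult (of_real (if fst p \<in> {1..K} then f (fst p) else 0)) (R p)"
    if "p \<in> I" for f p
    unfolding linA R_def using cm(4) that I_def by blast
  have linA_r: "R p ** (\<Sum>k=1..K. f k *\<^sub>R P k) = csmult (of_real (if fst p \<in> {1..K} then f (fst p) else 0)) (R p)"
    if "p \<in> I" for f p
    unfolding linA R_def using cm(5) that I_def by blast
  have linB_l: "(\<Sum>j=1..D. f j *\<^sub>R Q j) ** R p = csmult (of_real (if snd p \<in> {1..D} then f (snd p) else 0)) (R p)"
    if "p \<in> I" for f p
    unfolding linB R_def using cm(6) that I_def by blast
  have linB_r: "R p ** (\<Sum>j=1..D. f j *\<^sub>R Q j) = csmult (of_real (if snd p \<in> {1..D} then f (snd p) else 0)) (R p)"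
    if "p \<in> I" for f p
    unfolding linB R_def using cm(7) that I_def by blast
  have decomp: "X = (\<Sum>p\<in>I. csmult (x p) (R p))" if "\<And>p. p \<in> I \<Longrightarrow> X ** R p = csmult (x p) (R p)" for X x
    unfolding I_def R_def by (rule cm(3)) (use that in \<open>auto simp: I_def R_def\<close>)
  have PR: "R p ** P k = (if fst p = k then R p else 0)" if "k \<in> {1..K}" "p \<in> I" for k p
    using cm(9)[of k p] that by (simp add: PA R_def I_def)
  have RP: "P k ** R p = (if fst p = k then R p else 0)" if "k \<in> {1..K}" "p \<in> I" for k p
    using cm(8)[of k p] that by (simp add: PA R_def I_def)
  define thc where "thc \<theta>' p = (if fst p \<in> {1..K} then \<theta>' (fst p) else 0)" for \<theta>' :: "nat \<Rightarrow> real" and p :: "nat \<times> nat"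
  define gc where "gc \<gamma>' p = (if snd p \<in> {1..D} then \<gamma>' (snd p) else 0)" for \<gamma>' :: "nat \<Rightarrow> real" and p :: "nat \<times> nat"
  define Ac where "Ac \<alpha>' p q = (if fst p \<in> {1..K} \<and> fst q \<in> {1..K} then \<alpha>' (min (fst p) (fst q)) (max (fst p) (fst q)) else 0)"
    for \<alpha>' :: "nat \<Rightarrow> nat \<Rightarrow> real" and p q :: "nat \<times> nat"
  define Z where "Z \<theta>' \<gamma>' \<alpha>' p q = of_real (thc \<theta>' p) / 2 + \<i> / 2 * of_real (gc \<gamma>' p)
      + (of_real (thc \<theta>' q) / 2 - \<i> / 2 * of_real (gc \<gamma>' q)) + of_real (Ac \<alpha>' p q)" for \<theta>' \<gamma>' \<alpha>' p q
  have ra: "R p ** rho_alpha K P \<rho>0 \<alpha>' ** R q = csmult (of_real (exp (Ac \<alpha>' p q))) (M p q)"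
    if pq: "p \<in> I" "q \<in> I" for p q \<alpha>'
  proof -
    define T where "T = (\<lambda>(k, j). (exp (\<alpha>' k j) - 1) *\<^sub>R
          (P k ** \<rho>0 ** P j + (if k = j then 0 else 1) *\<^sub>R (P j ** \<rho>0 ** P k)))"
    define g where "g = (\<lambda>(k, j). (exp (\<alpha>' k j) - 1) *
      ((if fst p = k \<and> fst q = j then 1 else 0) + (if k = j then 0 else 1) * (if fst p = j \<and> fst q = k then 1 else (0::real))))"
    have key: "R p ** (P k ** \<rho>0 ** P j) ** R q = (if fst p = k \<and> fst q = j then M p q else 0)"
      if "k \<in> {1..K}" "j \<in> {1..K}" for k j
    proof -
      have "R p ** (P k ** \<rho>0 ** P j) ** R q = (R p ** P k) ** \<rho>0 ** (P j ** R q)"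
        by (simp add: matrix_mul_assoc)
      then show ?thesis using that pq by (simp add: PR RP M_def)
    qed
    have Tx: "R p ** T x ** R q = csmult (of_real (g x)) (M p q)" if "x \<in> alpha_idx K" for x
    proof -
      obtain k j where x: "x = (k, j)" by force
      have kj: "k \<in> {1..K}" "j \<in> {1..K}" using that x by (auto simp: alpha_idx_def)
      have k1: "R p ** (P k ** \<rho>0 ** P j) ** R q = (if fst p = k \<and> fst q = j then M p q else 0)"
        using key kj by blast
      have k2: "R p ** (P j ** \<rho>0 ** P k) ** R q = (if fst p = j \<and> fst q = k then M p q else 0)"
        using key kj by blast
      have "R p ** T x ** R q = (exp (\<alpha>' k j) - 1) *\<^sub>R ((if fst p = k \<and> fst q = j then M p q else 0)
          + (if k = j then 0 else 1) *\<^sub>R (if fst p = j \<and> fst q = k then M p q else 0))"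
        unfolding x T_def split lin3 k1 k2 ..
      also have "\<dots> = csmult (of_real (g x)) (M p q)"
        unfolding ifM scaleR_cs cs_add_r cs_mult cs_add[symmetric] x g_def split
        by (rule arg_cong[where f="\<lambda>z. csmult z (M p q)"]) simp
      finally show ?thesis .
    qed
    have "R p ** rho_alpha K P \<rho>0 \<alpha>' ** R q = M p q + (\<Sum>x\<in>alpha_idx K. R p ** T x ** R q)"
      unfolding rho_alpha_def T_def[symmetric]
      by (simp add: matrix_add_ldistrib mm_add_r mm_sum_l mm_sum_r M_def)
    also have "\<dots> = M p q + (\<Sum>x\<in>alpha_idx K. csmult (of_real (g x)) (M p q))"
      by (simp add: Tx)
    also have "\<dots> = csmult (of_real (1 + sum g (alpha_idx K))) (M p q)"
      by (simp add: cs_sum[symmetric] cs_add)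
    also have "1 + sum g (alpha_idx K) = exp (Ac \<alpha>' p q)"
      using alpha_coef[of "fst p" K "fst q" \<alpha>'] pq unfolding g_def Ac_def
      by (auto simp: I_def)
    finally show ?thesis .
  qed
  have rep: "rho_tilde K D P Q \<rho>0 \<theta>' \<gamma>' \<alpha>' = msum I M (\<lambda>p q. exp (Z \<theta>' \<gamma>' \<alpha>' p q))" for \<theta>' \<gamma>' \<alpha>'
  proof -
    have Lt: "L_theta K P \<theta>' = (\<Sum>p\<in>I. csmult (of_real (thc \<theta>' p)) (R p))"
      unfolding L_theta_def thc_def by (rule decomp) (rule linA_l)
    have Hg: "H_gamma D Q \<gamma>' = (\<Sum>p\<in>I. csmult (of_real (gc \<gamma>' p)) (R p))"
      unfolding H_gamma_def gc_def by (rule decomp) (rule linB_l)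
    have E1: "(1/2) *\<^sub>R L_theta K P \<theta>' + csmult (\<i>/2) (H_gamma D Q \<gamma>') =
       (\<Sum>p\<in>I. csmult (of_real (thc \<theta>' p) / 2 + \<i> / 2 * of_real (gc \<gamma>' p)) (R p))"
      by (simp add: Lt Hg scaleR_cs cs_sum_r cs_mult cs_add sum.distrib)
    have E2: "(1/2) *\<^sub>R L_theta K P \<theta>' - csmult (\<i>/2) (H_gamma D Q \<gamma>') =
       (\<Sum>p\<in>I. csmult (of_real (thc \<theta>' p) / 2 - \<i> / 2 * of_real (gc \<gamma>' p)) (R p))"
      by (simp add: Lt Hg scaleR_cs cs_sum_r cs_mult cs_diff sum_subtractf)
    have mE1: "mexp ((1/2) *\<^sub>R L_theta K P \<theta>' + csmult (\<i>/2) (H_gamma D Q \<gamma>')) =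
       (\<Sum>p\<in>I. csmult (exp (of_real (thc \<theta>' p) / 2 + \<i> / 2 * of_real (gc \<gamma>' p))) (R p))"
      unfolding E1 by (rule mexp_orth[OF finI orthR sumR])
    have mE2: "mexp ((1/2) *\<^sub>R L_theta K P \<theta>' - csmult (\<i>/2) (H_gamma D Q \<gamma>')) =
       (\<Sum>p\<in>I. csmult (exp (of_real (thc \<theta>' p) / 2 - \<i> / 2 * of_real (gc \<gamma>' p))) (R p))"
      unfolding E2 by (rule mexp_orth[OF finI orthR sumR])
    have "rho_tilde K D P Q \<rho>0 \<theta>' \<gamma>' \<alpha>' = (\<Sum>q\<in>I. \<Sum>p\<in>I.
       csmult (exp (of_real (thc \<theta>' p) / 2 + \<i> / 2 * of_real (gc \<gamma>' p)) *
               exp (of_real (thc \<theta>' q) / 2 - \<i> / 2 * of_real (gc \<gamma>' q)))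
         (R p ** rho_alpha K P \<rho>0 \<alpha>' ** R q))"
      unfolding rho_tilde_def mE1 mE2
      by (simp add: mm_sum_l mm_sum_r mm_cs_l mm_cs_r cs_mult cs_sum_r mult.commute)
    also have "\<dots> = msum I M (\<lambda>p q. exp (Z \<theta>' \<gamma>' \<alpha>' p q))"
      unfolding msum_def
      by (subst sum.swap) (intro sum.cong refl, simp add: ra cs_mult Z_def exp_add exp_of_real mult_ac)
    finally show ?thesis .
  qed

  define e where "e = (\<lambda>p q. exp (Z \<theta> \<gamma> \<alpha> p q))"
  define b\<theta> where "b\<theta> k p q = (if fst p = k then 1/2 else 0) + (if fst q = k then 1/2 else (0::complex))" for k :: nat and p q :: "nat \<times> nat"
  define b\<gamma> where "b\<gamma> j p q = (if snd p = j then \<i>/2 else 0) + (if snd q = j then -(\<i>/2) else (0::complex))" for j :: nat and p q :: "nat \<times> nat"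
  define b\<alpha> where "b\<alpha> k j p q = (if fst p \<in> {1..K} \<and> fst q \<in> {1..K} \<and> min (fst p) (fst q) = k \<and> max (fst p) (fst q) = j then 1 else (0::complex))" for k j :: nat and p q :: "nat \<times> nat"
  define D\<theta> where "D\<theta> k = msum I M (\<lambda>p q. b\<theta> k p q * e p q)" for k
  define D\<gamma> where "D\<gamma> j = msum I M (\<lambda>p q. b\<gamma> j p q * e p q)" for j
  define D\<alpha> where "D\<alpha> k j = msum I M (\<lambda>p q. b\<alpha> k j p q * e p q)" for k j
  have d1: "\<forall>k\<in>{1..K}. ((\<lambda>t. rho_tilde K D P Q \<rho>0 (\<theta>(k := t)) \<gamma> \<alpha>)
        has_vector_derivative D\<theta> k) (at (\<theta> k))"
  proof
    fix k assume k: "k \<in> {1..K}"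
    have z: "Z (\<theta>(k := t)) \<gamma> \<alpha> p q = Z (\<theta>(k := 0)) \<gamma> \<alpha> p q + of_real t * b\<theta> k p q" for t p q
      using k by (simp add: Z_def thc_def b\<theta>_def field_simps)
    show "((\<lambda>t. rho_tilde K D P Q \<rho>0 (\<theta>(k := t)) \<gamma> \<alpha>) has_vector_derivative D\<theta> k) (at (\<theta> k))"
      unfolding rep D\<theta>_def e_def
      using msum_deriv[OF finI z, where M=M and tt="\<theta> k"] by simp
  qed
  have d2: "\<forall>j\<in>{1..D}. ((\<lambda>t. rho_tilde K D P Q \<rho>0 \<theta> (\<gamma>(j := t)) \<alpha>)
        has_vector_derivative D\<gamma> j) (at (\<gamma> j))"
  proof
    fix j assume j: "j \<in> {1..D}"
    have z: "Z \<theta> (\<gamma>(j := t)) \<alpha> p q = Z \<theta> (\<gamma>(j := 0)) \<alpha> p q + of_real t * b\<gamma> j p q" for t p q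
      using j by (simp add: Z_def gc_def b\<gamma>_def field_simps)
    show "((\<lambda>t. rho_tilde K D P Q \<rho>0 \<theta> (\<gamma>(j := t)) \<alpha>) has_vector_derivative D\<gamma> j) (at (\<gamma> j))"
      unfolding rep D\<gamma>_def e_def
      using msum_deriv[OF finI z, where M=M and tt="\<gamma> j"] by simp
  qed
  have d3: "\<forall>(k, j)\<in>alpha_idx K. ((\<lambda>t. rho_tilde K D P Q \<rho>0 \<theta> \<gamma> (\<alpha>(k := (\<alpha> k)(j := t))))
        has_vector_derivative D\<alpha> k j) (at (\<alpha> k j))"
  proof (intro ballI, clarify)
    fix k j assume kj: "(k, j) \<in> alpha_idx K"
    have z: "Z \<theta> \<gamma> (\<alpha>(k := (\<alpha> k)(j := t))) p q = Z \<theta> \<gamma> (\<alpha>(k := (\<alpha> k)(j := 0))) p q + of_real t * b\<alpha> k j p q" for t p q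
      using kj by (simp add: Z_def Ac_def b\<alpha>_def alpha_idx_def)
    show "((\<lambda>t. rho_tilde K D P Q \<rho>0 \<theta> \<gamma> (\<alpha>(k := (\<alpha> k)(j := t)))) has_vector_derivative D\<alpha> k j) (at (\<alpha> k j))"
      unfolding rep D\<alpha>_def e_def
      using msum_deriv[OF finI z, where M=M and tt="\<alpha> k j"] by simp
  qed

  define lc where "lc p = (if fst p \<in> {1..K} then lam (fst p) else 0)" for p :: "nat \<times> nat"
  define hc where "hc p = (if snd p \<in> {1..D} then \<beta> (snd p) else 0)" for p :: "nat \<times> nat"
  have rho: "rho_tilde K D P Q \<rho>0 \<theta> \<gamma> \<alpha> = msum I M e" unfolding e_def by (rule rep)
  have LR: "L ** R p = csmult (of_real (lc p)) (R p)" if "p \<in> I" for p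
    unfolding L_dec lc_def using linA_l[OF that] .
  have RL: "R p ** L = csmult (of_real (lc p)) (R p)" if "p \<in> I" for p
    unfolding L_dec lc_def using linA_r[OF that] .
  have HR: "H ** R p = csmult (of_real (hc p)) (R p)" if "p \<in> I" for p
    unfolding H_dec hc_def using linB_l[OF that] .
  have RH: "R p ** H = csmult (of_real (hc p)) (R p)" if "p \<in> I" for p
    unfolding H_dec hc_def using linB_r[OF that] .
  have LM: "L ** M p q = csmult (of_real (lc p)) (M p q)" if "p \<in> I" "q \<in> I" for p q
    using that by (simp add: M_def matrix_mul_assoc LR mm_cs_l)
  have MLq: "M p q ** L = csmult (of_real (lc q)) (M p q)" if "p \<in> I" "q \<in> I" for p q
    using that by (simp add: M_def matrix_mul_assoc[symmetric] RL mm_cs_r)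
  have HM: "H ** M p q = csmult (of_real (hc p)) (M p q)" if "p \<in> I" "q \<in> I" for p q
    using that by (simp add: M_def matrix_mul_assoc HR mm_cs_l)
  have MH: "M p q ** H = csmult (of_real (hc q)) (M p q)" if "p \<in> I" "q \<in> I" for p q
    using that by (simp add: M_def matrix_mul_assoc[symmetric] RH mm_cs_r)
  note mL = msum_mult_l[where x="\<lambda>p q. of_real (lc p)", OF LM]
  note mR = msum_mult_r[where x="\<lambda>p q. of_real (lc q)", OF MLq]
  note hL = msum_mult_l[where x="\<lambda>p q. of_real (hc p)", OF HM]
  note hR = msum_mult_r[where x="\<lambda>p q. of_real (hc q)", OF MH]
  have pI: "fst p \<le> K" "snd p \<le> D" if "p \<in> I" for p using that by (auto simp: I_def)
  let ?\<rho> = "rho_tilde K D P Q \<rho>0 \<theta> \<gamma> \<alpha>"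
  have eq1: "csmult \<i> (comm H ?\<rho>) = 2 *\<^sub>R (\<Sum>j=1..D. \<beta> j *\<^sub>R D\<gamma> j)"
  proof -
    have "csmult \<i> (comm H ?\<rho>) = msum I M (\<lambda>p q. \<i> * (of_real (hc p) * e p q - of_real (hc q) * e p q))"
      unfolding comm_def rho
      by (simp only: hL hR msum_diff msum_cs)
    also have "\<dots> = msum I M (\<lambda>p q. of_real 2 * (\<Sum>j=1..D. of_real (\<beta> j) * (b\<gamma> j p q * e p q)))"
    proof (rule msum_cong)
      fix p q assume "p \<in> I" "q \<in> I"
      show "\<i> * (of_real (hc p) * e p q - of_real (hc q) * e p q) = of_real 2 * (\<Sum>j=1..D. of_real (\<beta> j) * (b\<gamma> j p q * e p q))"
        unfolding b\<gamma>_def sum_delta2[OF finite_atLeastAtMost] hc_def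
        by (simp add: algebra_simps)
    qed
    also have "\<dots> = 2 *\<^sub>R (\<Sum>j=1..D. \<beta> j *\<^sub>R D\<gamma> j)"
      by (simp add: D\<gamma>_def msum_scaleR msum_sum)
    finally show ?thesis .
  qed
  have eq2: "L ** ?\<rho> + ?\<rho> ** L = 2 *\<^sub>R (\<Sum>k=1..K. lam k *\<^sub>R D\<theta> k)"
  proof -
    have "L ** ?\<rho> + ?\<rho> ** L = msum I M (\<lambda>p q. of_real (lc p) * e p q + of_real (lc q) * e p q)"
      unfolding rho by (simp only: mL mR msum_add)
    also have "\<dots> = msum I M (\<lambda>p q. of_real 2 * (\<Sum>k=1..K. of_real (lam k) * (b\<theta> k p q * e p q)))"
    proof (rule msum_cong)
      fix p q assume "p \<in> I" "q \<in> I"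
      show "of_real (lc p) * e p q + of_real (lc q) * e p q = of_real 2 * (\<Sum>k=1..K. of_real (lam k) * (b\<theta> k p q * e p q))"
        unfolding b\<theta>_def sum_delta2[OF finite_atLeastAtMost] lc_def
        by (simp add: algebra_simps)
    qed
    also have "\<dots> = 2 *\<^sub>R (\<Sum>k=1..K. lam k *\<^sub>R D\<theta> k)"
      by (simp add: D\<theta>_def msum_scaleR msum_sum)
    finally show ?thesis .
  qed
  have adjL: "adj L = L" using herm_L by (simp add: hermitian_def)
  have eq3: "Fmap \<eta> L ?\<rho> = (1 - \<eta>) *\<^sub>R (\<Sum>(k, j)\<in>alpha_idx K. (lam k * lam j) *\<^sub>R D\<alpha> k j)
                       - (1 + \<eta>) *\<^sub>R (\<Sum>k=1..K. (lam k)\<^sup>2 *\<^sub>R D\<theta> k)"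
  proof -
    have l1: "\<eta> *\<^sub>R L + L = (1 + \<eta>) *\<^sub>R L" by (simp add: scaleR_add_left)
    have l2: "L + \<eta> *\<^sub>R L = (1 + \<eta>) *\<^sub>R L" by (simp add: scaleR_add_left)
    have t2: "(\<eta> *\<^sub>R L + L) ** L ** ?\<rho> = (1 + \<eta>) *\<^sub>R (L ** (L ** ?\<rho>))"
      unfolding l1 by (simp add: scaleR_cs mm_cs_l matrix_mul_assoc)
    have t3: "?\<rho> ** L ** (L + \<eta> *\<^sub>R L) = (1 + \<eta>) *\<^sub>R ((?\<rho> ** L) ** L)"
      unfolding l2 by (simp add: scaleR_cs mm_cs_r)
    have "Fmap \<eta> L ?\<rho> = msum I M (\<lambda>p q. of_real (1 - \<eta>) * (of_real (lc q) * (of_real (lc p) * e p q))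
         - of_real (1/2) * (of_real (1 + \<eta>) * (of_real (lc p) * (of_real (lc p) * e p q))
                          + of_real (1 + \<eta>) * (of_real (lc q) * (of_real (lc q) * e p q))))"
      unfolding Fmap_def adjL t2 t3 unfolding rho by (simp only: mL mR msum_scaleR msum_add msum_diff)
    also have "\<dots> = msum I M (\<lambda>p q. of_real (1 - \<eta>) * (\<Sum>(k, j)\<in>alpha_idx K. of_real (lam k * lam j) * (b\<alpha> k j p q * e p q))
         - of_real (1 + \<eta>) * (\<Sum>k=1..K. of_real ((lam k)\<^sup>2) * (b\<theta> k p q * e p q)))"
    proof (rule msum_cong)
      fix p q assume p: "p \<in> I" and q: "q \<in> I"
      have s1: "(\<Sum>(k, j)\<in>alpha_idx K. of_real (lam k * lam j) * (b\<alpha> k j p q * e p q))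
          = of_real (lc p * lc q) * e p q"
      proof -
        have "(\<Sum>(k, j)\<in>alpha_idx K. of_real (lam k * lam j) * (b\<alpha> k j p q * e p q))
           = (\<Sum>(k, j)\<in>alpha_idx K. (of_real (lam k * lam j) * e p q) *
               (if fst p \<in> {1..K} \<and> fst q \<in> {1..K} \<and> min (fst p) (fst q) = k \<and> max (fst p) (fst q) = j then 1 else 0))"
          unfolding b\<alpha>_def by (intro sum.cong refl) (auto simp: split_def)
        also have "\<dots> = (if fst p \<in> {1..K} \<and> fst q \<in> {1..K} then
               of_real (lam (min (fst p) (fst q)) * lam (max (fst p) (fst q))) * e p q else 0)"
          by (rule lamlam_coef[OF pI(1)[OF p] pI(1)[OF q]])
        also have "\<dots> = of_real (lc p * lc q) * e p q"
          by (cases "fst p \<le> fst q") (auto simp: lc_def min_def max_def mult.commute)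
        finally show ?thesis .
      qed
      have s2: "(\<Sum>k=1..K. of_real ((lam k)\<^sup>2) * (b\<theta> k p q * e p q))
          = (of_real ((lc p)\<^sup>2) / 2 + of_real ((lc q)\<^sup>2) / 2) * e p q"
        unfolding b\<theta>_def sum_delta2[OF finite_atLeastAtMost] lc_def
        by (simp add: algebra_simps)
      show "of_real (1 - \<eta>) * (of_real (lc q) * (of_real (lc p) * e p q))
         - of_real (1/2) * (of_real (1 + \<eta>) * (of_real (lc p) * (of_real (lc p) * e p q))
                          + of_real (1 + \<eta>) * (of_real (lc q) * (of_real (lc q) * e p q)))
         = of_real (1 - \<eta>) * (\<Sum>(k, j)\<in>alpha_idx K. of_real (lam k * lam j) * (b\<alpha> k j p q * e p q))
         - of_real (1 + \<eta>) * (\<Sum>k=1..K. of_real ((lam k)\<^sup>2) * (b\<theta> k p q * e p q))"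
        unfolding s1 s2 by (simp add: field_simps power2_eq_square)
    qed
    also have "\<dots> = (1 - \<eta>) *\<^sub>R (\<Sum>(k, j)\<in>alpha_idx K. (lam k * lam j) *\<^sub>R D\<alpha> k j)
                       - (1 + \<eta>) *\<^sub>R (\<Sum>k=1..K. (lam k)\<^sup>2 *\<^sub>R D\<theta> k)"
    proof -
      have sa: "(\<Sum>(k, j)\<in>alpha_idx K. (lam k * lam j) *\<^sub>R D\<alpha> k j) =
         msum I M (\<lambda>p q. \<Sum>(k, j)\<in>alpha_idx K. of_real (lam k * lam j) * (b\<alpha> k j p q * e p q))"
      proof -
        have "(\<Sum>(k, j)\<in>alpha_idx K. (lam k * lam j) *\<^sub>R D\<alpha> k j) =
          (\<Sum>x\<in>alpha_idx K. msum I M (\<lambda>p q. (case x of (k, j) \<Rightarrow> of_real (lam k * lam j) * (b\<alpha> k j p q * e p q))))"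
          by (intro sum.cong refl) (auto simp: D\<alpha>_def msum_scaleR split: prod.splits)
        also have "\<dots> = msum I M (\<lambda>p q. \<Sum>(k, j)\<in>alpha_idx K. of_real (lam k * lam j) * (b\<alpha> k j p q * e p q))"
          by (simp only: msum_sum)
        finally show ?thesis .
      qed
      have st: "(\<Sum>k=1..K. (lam k)\<^sup>2 *\<^sub>R D\<theta> k) =
         msum I M (\<lambda>p q. \<Sum>k=1..K. of_real ((lam k)\<^sup>2) * (b\<theta> k p q * e p q))"
        by (simp add: D\<theta>_def msum_scaleR msum_sum)
      show ?thesis unfolding sa st by (simp only: msum_scaleR msum_diff)
    qed
    finally show ?thesis .
  qed
  let ?S = "span (D\<theta> ` {1..K} \<union> D\<gamma> ` {1..D} \<union> (\<lambda>(k, j). D\<alpha> k j) ` alpha_idx K)"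
  have inS\<theta>: "D\<theta> k \<in> ?S" if "k \<in> {1..K}" for k using that by (intro span_base) auto
  have inS\<gamma>: "D\<gamma> j \<in> ?S" if "j \<in> {1..D}" for j using that by (intro span_base) auto
  have inS\<alpha>: "D\<alpha> k j \<in> ?S" if "(k, j) \<in> alpha_idx K" for k j
  proof (intro span_base UnI2)
    show "D\<alpha> k j \<in> (\<lambda>(k, j). D\<alpha> k j) ` alpha_idx K" using that by (rule rev_image_eqI) simp
  qed
  have sp1: "2 *\<^sub>R (\<Sum>j=1..D. \<beta> j *\<^sub>R D\<gamma> j) \<in> ?S"
    by (intro span_scale span_sum inS\<gamma>)
  have sp2: "2 *\<^sub>R (\<Sum>k=1..K. lam k *\<^sub>R D\<theta> k) \<in> ?S"
    by (intro span_scale span_sum inS\<theta>)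
  have sp3: "(1 - \<eta>) *\<^sub>R (\<Sum>(k, j)\<in>alpha_idx K. (lam k * lam j) *\<^sub>R D\<alpha> k j)
                       - (1 + \<eta>) *\<^sub>R (\<Sum>k=1..K. (lam k)\<^sup>2 *\<^sub>R D\<theta> k) \<in> ?S"
  proof (intro span_diff span_scale span_sum inS\<theta>)
    fix x assume x: "x \<in> alpha_idx K"
    obtain k j where xk: "x = (k, j)" by force
    have "D\<alpha> k j \<in> ?S" using x xk inS\<alpha> by blast
    then show "(case x of (k, j) \<Rightarrow> (lam k * lam j) *\<^sub>R D\<alpha> k j) \<in> ?S"
      unfolding xk split by (rule span_scale)
  qed auto
  show ?thesis
    apply (rule exI[of _ D\<theta>])
    apply (rule exI[of _ D\<gamma>])
    apply (rule exI[of _ D\<alpha>])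
    apply (unfold Let_def)
    using d1 d2 d3 eq1 eq2 eq3 sp1 sp2 sp3 by simp
qed

end
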